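(* Let $P\subseteq\mathbb{R}^d$ be a lattice polytope of dimension $d$, and suppose there are Fine core normals $a_0,\dots,a_\ell$ of $P$ and coefficients $\lambda_0,\dots,\lambda_\ell\in\mathbb{R}_{>0}$ such that $\sum_{i=0}^{\ell}\lambda_i a_i=0$. Then there is a lattice polytope $Q$ of dimension at most $\ell$ such that $\mu^F(P)=\mu^F(Q)$.
   Context: For a $d$-dimensional rational polytope $P\subseteq\mathbb{R}^d$ and $a\in(\mathbb{Z}^d)^*$ let $h_P(a)=\min_{x\in P}\langle a,x\rangle$. For $s>0$ the Fine adjoint polytope is $P^{F(s)}=\{x\in\mathbb{R}^d : \langle a,x\rangle\ge h_P(a)+s \text{ for all } a\in(\mathbb{Z}^d)^*\setminus\{0\}\}$. The Fine $\mathbb{Q}$-codegree is $\mu^F(P)=(\sup\{s>0 : P^{F(s)}\neq\emptyset\})^{-1}$, the Fine number is $n^F(P)=1/\mu^F(P)$, and the Fine core is $\operatorname{core}^F(P)=P^{F(n^F(P))}$. A Fine core normal of $P$ is a nonzero $a\in(\mathbb{Z}^d)^*$ with $\langle a,y\rangle=h_P(a)+n^F(P)$ for all $y\in\operatorname{core}^F(P)$. The Fine $\mathbb{Q}$-codegree of a polytope that is a lattice polytope with respect to some lattice $\Lambda$ is defined analogously using $\Lambda$ and its dual lattice in place of $\mathbb{Z}^d$ and $(\mathbb{Z}^d)^*$. *)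

theory Defs
  imports "HOL-Analysis.Analysis"
begin

text \<open>A lattice in a Euclidean space: the integer span of a linearly independent set
  (its real span is the ambient subspace of the lattice).\<close>
definition is_lattice :: "'a::euclidean_space set \<Rightarrow> bool" where
  "is_lattice L \<longleftrightarrow>
     (\<exists>B. independent B \<and> L = {\<Sum>b\<in>B. of_int (c b) *\<^sub>R b | c. True})"

definition std_lattice :: "'a::euclidean_space set" where
  "std_lattice = {x. \<forall>b\<in>Basis. x \<bullet> b \<in> \<int>}"

definition dual_lattice :: "'a::euclidean_space set \<Rightarrow> 'a set" where
  "dual_lattice L = {a \<in> span L. \<forall>x\<in>L. a \<bullet> x \<in> \<int>}"

definition lattice_polytope :: "'a::euclidean_space set \<Rightarrow> 'a set \<Rightarrow> bool" where
  "lattice_polytope L P \<longleftrightarrow> (\<exists>V. finite V \<and> V \<noteq> {} \<and> V \<subseteq> L \<and> P = convex hull V)"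

definition supp_fun :: "'a::euclidean_space set \<Rightarrow> 'a \<Rightarrow> real" where
  "supp_fun P a = Inf ((\<lambda>x. a \<bullet> x) ` P)"

definition fine_adjoint :: "'a::euclidean_space set \<Rightarrow> 'a set \<Rightarrow> real \<Rightarrow> 'a set" where
  "fine_adjoint L P s =
     {x \<in> span L. \<forall>a \<in> dual_lattice L - {0}. a \<bullet> x \<ge> supp_fun P a + s}"

definition fine_number :: "'a::euclidean_space set \<Rightarrow> 'a set \<Rightarrow> real" where
  "fine_number L P = Sup {s. s > 0 \<and> fine_adjoint L P s \<noteq> {}}"

definition fine_codegree :: "'a::euclidean_space set \<Rightarrow> 'a set \<Rightarrow> real" where
  "fine_codegree L P = inverse (fine_number L P)"

definition fine_core :: "'a::euclidean_space set \<Rightarrow> 'a set \<Rightarrow> 'a set" where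
  "fine_core L P = fine_adjoint L P (fine_number L P)"

definition fine_core_normal :: "'a::euclidean_space set \<Rightarrow> 'a set \<Rightarrow> 'a \<Rightarrow> bool" where
  "fine_core_normal L P a \<longleftrightarrow> a \<in> dual_lattice L \<and> a \<noteq> 0 \<and>
     (\<forall>y\<in>fine_core L P. a \<bullet> y = supp_fun P a + fine_number L P)"

end

theory Submission
  imports Defs
begin


definition zspan :: "'a::euclidean_space set \<Rightarrow> 'a set" where
  "zspan B = {\<Sum>b\<in>B. of_int (c b) *\<^sub>R b | c. True}"

definition sgrp :: "'a::euclidean_space set \<Rightarrow> bool" where
  "sgrp G \<longleftrightarrow> 0 \<in> G \<and> (\<forall>x\<in>G. \<forall>y\<in>G. x - y \<in> G)"

lemma sgrp_neg: "sgrp G \<Longrightarrow> x \<in> G \<Longrightarrow> - x \<in> G"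
  unfolding sgrp_def by (metis diff_0)

lemma sgrp_add: "sgrp G \<Longrightarrow> x \<in> G \<Longrightarrow> y \<in> G \<Longrightarrow> x + y \<in> G"
  unfolding sgrp_def by (metis diff_minus_eq_add sgrp_def sgrp_neg)

lemma sgrp_diff: "sgrp G \<Longrightarrow> x \<in> G \<Longrightarrow> y \<in> G \<Longrightarrow> x - y \<in> G"
  unfolding sgrp_def by blast

lemma sgrp_nat_mult: "sgrp G \<Longrightarrow> x \<in> G \<Longrightarrow> of_nat n *\<^sub>R x \<in> G"
proof (induction n)
  case 0 then show ?case by (simp add: sgrp_def)
next
  case (Suc n) then show ?case using sgrp_add[of G x "of_nat n *\<^sub>R x"]
    by (simp add: algebra_simps)
qed

lemma sgrp_int_mult: "sgrp G \<Longrightarrow> x \<in> G \<Longrightarrow> of_int k *\<^sub>R x \<in> G"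
proof (cases "k \<ge> 0")
  case True
  assume "sgrp G" "x \<in> G"
  then have "of_nat (nat k) *\<^sub>R x \<in> G" by (rule sgrp_nat_mult)
  then show ?thesis using True by simp
next
  case False
  assume a: "sgrp G" "x \<in> G"
  then have "of_nat (nat (-k)) *\<^sub>R x \<in> G" by (rule sgrp_nat_mult)
  then have "- (of_nat (nat (-k)) *\<^sub>R x) \<in> G" using a sgrp_neg by blast
  then show ?thesis using False by simp
qed

lemma sgrp_sum: "finite S \<Longrightarrow> sgrp G \<Longrightarrow> (\<And>x. x \<in> S \<Longrightarrow> f x \<in> G) \<Longrightarrow> sum f S \<in> G"
proof (induction S rule: finite_induct)
  case empty then show ?case by (simp add: sgrp_def)
next
  case (insert a S) then show ?case by (simp add: sgrp_add)
qed

lemma zspan_subset: "finite C \<Longrightarrow> C \<subseteq> G \<Longrightarrow> sgrp G \<Longrightarrow> zspan C \<subseteq> G"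
  unfolding zspan_def
  by (auto intro!: sgrp_sum sgrp_int_mult)

lemma zspan_mem: "finite C \<Longrightarrow> x \<in> C \<Longrightarrow> x \<in> zspan C"
  unfolding zspan_def
proof (intro CollectI exI conjI)
  assume "finite C" "x \<in> C"
  then show "x = (\<Sum>b\<in>C. of_int (if b = x then 1 else 0) *\<^sub>R b)"
  proof -
    have "(\<Sum>b\<in>C. of_int (if b = x then 1 else 0) *\<^sub>R b) = (\<Sum>b\<in>C. (if b = x then b else 0))"
      by (rule sum.cong) auto
    also have "\<dots> = x" using \<open>finite C\<close> \<open>x \<in> C\<close> by (simp add: sum.delta')
    finally show ?thesis by simp
  qed
qed simp

lemma zspan_sgrp: "sgrp (zspan C)"
  unfolding sgrp_def zspan_def
proof (intro conjI ballI)
  show "0 \<in> {\<Sum>b\<in>C. of_int (c b) *\<^sub>R b |c. True}"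
    by (rule CollectI, rule exI[of _ "\<lambda>_. 0"]) simp
next
  fix x y assume "x \<in> {\<Sum>b\<in>C. of_int (c b) *\<^sub>R b |c. True}" "y \<in> {\<Sum>b\<in>C. of_int (c b) *\<^sub>R b |c. True}"
  then obtain c d where "x = (\<Sum>b\<in>C. of_int (c b) *\<^sub>R b)" "y = (\<Sum>b\<in>C. of_int (d b) *\<^sub>R b)" by auto
  then have "x - y = (\<Sum>b\<in>C. of_int (c b - d b) *\<^sub>R b)"
    by (simp add: sum_subtractf scaleR_diff_left)
  then show "x - y \<in> {\<Sum>b\<in>C. of_int (c b) *\<^sub>R b |c. True}"
    by (intro CollectI exI[of _ "\<lambda>b. c b - d b"]) simp
qed

lemma coef_zero:
  fixes b :: "'a::euclidean_space"
  assumes "b \<notin> span B'" "x = k *\<^sub>R b + s" "s \<in> span B'" "x \<in> span B'"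
  shows "k = 0"
proof (rule ccontr)
  assume "k \<noteq> 0"
  have "k *\<^sub>R b \<in> span B'" using assms by (metis add_diff_cancel_right' span_diff)
  then have "inverse k *\<^sub>R (k *\<^sub>R b) \<in> span B'" by (rule span_mul)
  then show False using \<open>k \<noteq> 0\<close> assms(1) by simp
qed



lemma zbasis:
  fixes B :: "'a::euclidean_space set"
  assumes "finite B" "independent B" "sgrp G" "G \<subseteq> zspan B"
  shows "\<exists>C. finite C \<and> independent C \<and> C \<subseteq> G \<and> G = zspan C"
  using assms
proof (induction B arbitrary: G rule: finite_induct)
  case empty
  have "zspan ({}::'a set) = {0}" unfolding zspan_def by auto
  then have "G = zspan {}" using empty.prems by (auto simp: sgrp_def)
  then show ?case by (intro exI[of _ "{}"]) (auto simp: dependent_def)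
next
  case (insert b B')
  have indB': "independent B'" and bnot: "b \<notin> span B'"
    using insert.prems(1) insert.hyps(2) by (auto simp: independent_insert)
  define G' where "G' = G \<inter> span B'"
  have sG': "sgrp G'" using insert.prems(2) unfolding G'_def sgrp_def
    by (auto simp: span_zero span_diff)
  have rep: "\<exists>c. x = of_int (c b) *\<^sub>R b + (\<Sum>v\<in>B'. of_int (c v) *\<^sub>R v)" if "x \<in> G" for x
  proof -
    from that insert.prems(3) obtain c where "x = (\<Sum>v\<in>insert b B'. of_int (c v) *\<^sub>R v)"
      unfolding zspan_def by blast
    then show ?thesis using insert.hyps by (intro exI[of _ c]) simp
  qed
  have inspan: "(\<Sum>v\<in>B'. of_int (c v) *\<^sub>R v) \<in> span B'" for c :: "'a \<Rightarrow> int"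
    by (intro span_sum span_mul span_base)
  have zero_coef: "c b = 0" if "x \<in> span B'" "x = of_int (c b) *\<^sub>R b + (\<Sum>v\<in>B'. of_int (c v) *\<^sub>R v)"
    for x c
    using coef_zero[OF bnot that(2) inspan that(1)] by simp
  have "G' \<subseteq> zspan B'"
  proof
    fix x assume "x \<in> G'"
    then have x: "x \<in> G" "x \<in> span B'" unfolding G'_def by auto
    obtain c where c: "x = of_int (c b) *\<^sub>R b + (\<Sum>v\<in>B'. of_int (c v) *\<^sub>R v)" using rep x by blast
    then have "c b = 0" using zero_coef x by blast
    then have "x = (\<Sum>v\<in>B'. of_int (c v) *\<^sub>R v)" using c by simp
    then show "x \<in> zspan B'" unfolding zspan_def by blast
  qed
  then obtain C' where C': "finite C'" "independent C'" "C' \<subseteq> G'" "G' = zspan C'"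
    using insert.IH[OF indB' sG'] by blast
  define K where "K = {k::int. \<exists>x\<in>G. \<exists>c. x = of_int (c b) *\<^sub>R b + (\<Sum>v\<in>B'. of_int (c v) *\<^sub>R v) \<and> c b = k}"
  show ?case
  proof (cases "K \<subseteq> {0}")
    case True
    have "G \<subseteq> G'"
    proof
      fix x assume x: "x \<in> G"
      obtain c where c: "x = of_int (c b) *\<^sub>R b + (\<Sum>v\<in>B'. of_int (c v) *\<^sub>R v)" using rep x by blast
      then have "c b \<in> K" unfolding K_def using x by blast
      then have "c b = 0" using True by auto
      then show "x \<in> G'" using c x inspan unfolding G'_def by simp
    qed
    then have "G = G'" unfolding G'_def by auto
    then show ?thesis using C' by blast
  next
    case False
    then obtain k where k: "k \<in> K" "k \<noteq> 0" by auto
    have Kneg: "- k \<in> K" if "k \<in> K" for k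
    proof -
      from that obtain x c where x: "x \<in> G" "x = of_int (c b) *\<^sub>R b + (\<Sum>v\<in>B'. of_int (c v) *\<^sub>R v)" "c b = k"
        unfolding K_def by blast
      have "- x \<in> G" using x insert.prems(2) sgrp_neg by blast
      moreover have "- x = of_int (- c b) *\<^sub>R b + (\<Sum>v\<in>B'. of_int (- c v) *\<^sub>R v)"
        using x by (simp add: sum_negf)
      ultimately show ?thesis unfolding K_def using x(3)
        by (intro CollectI bexI[of _ "- x"] exI[of _ "\<lambda>v. - c v"]) auto
    qed
    have "\<exists>n::nat. n > 0 \<and> int n \<in> K"
    proof (cases "k > 0")
      case True then show ?thesis using k by (intro exI[of _ "nat k"]) auto
    next
      case False then show ?thesis using k Kneg[OF k(1)] by (intro exI[of _ "nat (- k)"]) auto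
    qed
    define n where "n = (LEAST n::nat. n > 0 \<and> int n \<in> K)"
    have n: "n > 0" "int n \<in> K" using LeastI_ex[OF \<open>\<exists>n::nat. n > 0 \<and> int n \<in> K\<close>] unfolding n_def by auto
    have nmin: "n \<le> m" if "m > 0" "int m \<in> K" for m
      unfolding n_def using that by (intro Least_le) auto
    obtain g cg where g: "g \<in> G" "g = of_int (cg b) *\<^sub>R b + (\<Sum>v\<in>B'. of_int (cg v) *\<^sub>R v)" "cg b = int n"
      using n(2) unfolding K_def by blast
    have gnot: "g \<notin> span B'"
      using zero_coef[OF _ g(2)] g(3) n(1) by auto
    have red: "x - of_int (c b div int n) *\<^sub>R g \<in> G'"
      if x: "x \<in> G" "x = of_int (c b) *\<^sub>R b + (\<Sum>v\<in>B'. of_int (c v) *\<^sub>R v)" for x c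
    proof -
      define q where "q = c b div int n"
      define r where "r = c b mod int n"
      have cbqr: "c b = q * int n + r" unfolding q_def r_def by simp
      have r: "0 \<le> r" "r < int n" unfolding r_def using n(1) by auto
      define y where "y = x - of_int q *\<^sub>R g"
      have yG: "y \<in> G" unfolding y_def using x(1) g(1) insert.prems(2)
        by (intro sgrp_diff sgrp_int_mult)
      have "y = of_int (c b - q * cg b) *\<^sub>R b + (\<Sum>v\<in>B'. of_int (c v - q * cg v) *\<^sub>R v)"
        unfolding y_def x(2) g(2)
        by (simp add: algebra_simps scaleR_sum_right sum_subtractf)
      then have yrep: "y = of_int ((\<lambda>v. c v - q * cg v) b) *\<^sub>R b + (\<Sum>v\<in>B'. of_int ((\<lambda>v. c v - q * cg v) v) *\<^sub>R v)"
        by simp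
      have "c b - q * cg b = r" using cbqr g(3) by simp
      then have rK: "r \<in> K" unfolding K_def using yG yrep
        by (intro CollectI bexI[of _ y] exI[of _ "\<lambda>v. c v - q * cg v"]) auto
      have "r = 0"
      proof (rule ccontr)
        assume "r \<noteq> 0"
        then have "nat r > 0" "int (nat r) \<in> K" using r rK by auto
        then have "n \<le> nat r" by (rule nmin)
        then show False using r by linarith
      qed
      then have "y = (\<Sum>v\<in>B'. of_int ((\<lambda>v. c v - q * cg v) v) *\<^sub>R v)"
        using yrep \<open>c b - q * cg b = r\<close> by simp
      then have "y \<in> span B'" using inspan[of "\<lambda>v. c v - q * cg v"] by metis
      then show ?thesis using yG unfolding G'_def y_def q_def by simp
    qed
    have C'sub: "C' \<subseteq> span B'" using C'(3) unfolding G'_def by auto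
    have spanC': "span C' \<subseteq> span B'"
      using C'sub by (metis span_minimal subspace_span)
    have gC': "g \<notin> C'" using C'sub gnot by auto
    have indep: "independent (insert g C')"
      using C'(2) gC' spanC' gnot by (auto simp: independent_insert)
    have "G = zspan (insert g C')"
    proof
      show "zspan (insert g C') \<subseteq> G"
        using C'(1,3) g(1) insert.prems(2) unfolding G'_def by (intro zspan_subset) auto
    next
      show "G \<subseteq> zspan (insert g C')"
      proof
        fix x assume x: "x \<in> G"
        obtain c where c: "x = of_int (c b) *\<^sub>R b + (\<Sum>v\<in>B'. of_int (c v) *\<^sub>R v)" using rep x by blast
        define q where "q = c b div int n"
        have "x - of_int q *\<^sub>R g \<in> zspan C'" using red[OF x c] C'(4) unfolding q_def by simp
        then obtain e where e: "x - of_int q *\<^sub>R g = (\<Sum>v\<in>C'. of_int (e v) *\<^sub>R v)"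
          unfolding zspan_def by blast
        have "(\<Sum>v\<in>insert g C'. of_int ((e(g := q)) v) *\<^sub>R v)
              = of_int q *\<^sub>R g + (\<Sum>v\<in>C'. of_int ((e(g := q)) v) *\<^sub>R v)"
          using C'(1) gC' by simp
        also have "(\<Sum>v\<in>C'. of_int ((e(g := q)) v) *\<^sub>R v) = (\<Sum>v\<in>C'. of_int (e v) *\<^sub>R v)"
          using gC' by (intro sum.cong) auto
        finally have "x = (\<Sum>v\<in>insert g C'. of_int ((e(g := q)) v) *\<^sub>R v)"
          using e by (simp add: algebra_simps)
        then show "x \<in> zspan (insert g C')" unfolding zspan_def by blast
      qed
    qed
    then show ?thesis using indep C'(1) C'(3) g(1) unfolding G'_def
      by (intro exI[of _ "insert g C'"]) auto
  qed
qed



lemma dual_basis_exists: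
  fixes C :: "'a::euclidean_space set"
  assumes "finite C" "independent C"
  obtains ds where "\<And>c. c \<in> C \<Longrightarrow> ds c \<in> span C"
    "\<And>c c'. c \<in> C \<Longrightarrow> c' \<in> C \<Longrightarrow> ds c \<bullet> c' = (if c = c' then 1 else 0)"
proof -
  have "\<exists>w. w \<in> span C \<and> (\<forall>c'\<in>C. w \<bullet> c' = (if c = c' then 1 else 0))" if c: "c \<in> C" for c
  proof -
    obtain y z where yz: "y \<in> span (C - {c})" "\<And>w. w \<in> span (C - {c}) \<Longrightarrow> orthogonal z w" "c = y + z"
      using orthogonal_subspace_decomp_exists[of "C - {c}" c] by blast
    have sub: "span (C - {c}) \<subseteq> span C" by (rule span_mono) auto
    have "z \<noteq> 0"
    proof
      assume "z = 0"
      then have "c \<in> span (C - {c})" using yz by simp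
      then show False using assms(2) c unfolding dependent_def by blast
    qed
    then have zz: "z \<bullet> z > 0" by simp
    have zC: "z \<in> span C" using yz sub c by (metis add_diff_cancel_left' span_base span_diff subsetD)
    have zy: "z \<bullet> y = 0" using yz(2)[OF yz(1)] by (simp add: orthogonal_def)
    define w where "w = inverse (z \<bullet> z) *\<^sub>R z"
    have "w \<bullet> c = 1" unfolding w_def using zz zy yz(3) by (simp add: inner_add_right)
    moreover have "w \<bullet> c' = 0" if "c' \<in> C" "c' \<noteq> c" for c'
    proof -
      have "c' \<in> span (C - {c})" using that by (intro span_base) auto
      then have "z \<bullet> c' = 0" using yz(2) by (simp add: orthogonal_def)
      then show ?thesis unfolding w_def by simp
    qed
    moreover have "w \<in> span C" unfolding w_def using zC by (rule span_mul)
    ultimately show ?thesis by (intro exI[of _ w]) auto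
  qed
  then obtain ds where "\<forall>c\<in>C. ds c \<in> span C \<and> (\<forall>c'\<in>C. ds c \<bullet> c' = (if c = c' then 1 else 0))"
    by metis
  then show ?thesis using that by blast
qed

locale dualb =
  fixes C :: "'a::euclidean_space set" and ds :: "'a \<Rightarrow> 'a"
  assumes fin: "finite C" and ind: "independent C"
    and dsC: "\<And>c. c \<in> C \<Longrightarrow> ds c \<in> span C"
    and dsd: "\<And>c c'. c \<in> C \<Longrightarrow> c' \<in> C \<Longrightarrow> ds c \<bullet> c' = (if c = c' then 1 else 0)"
begin

definition pr :: "'a \<Rightarrow> 'a" where "pr x = (\<Sum>c\<in>C. (x \<bullet> c) *\<^sub>R ds c)"

lemma sum_delta_dot: "c' \<in> C \<Longrightarrow> (\<Sum>c\<in>C. f c * (ds c \<bullet> c')) = f c'"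
proof -
  assume c': "c' \<in> C"
  have "(\<Sum>c\<in>C. f c * (ds c \<bullet> c')) = (\<Sum>c\<in>C. if c = c' then f c else 0)"
    using c' by (intro sum.cong) (auto simp: dsd)
  also have "\<dots> = f c'" using fin c' by (simp add: sum.delta')
  finally show ?thesis .
qed

lemma exp1: assumes "u \<in> span C" shows "u = (\<Sum>c\<in>C. (u \<bullet> ds c) *\<^sub>R c)"
proof -
  obtain t where t: "u = (\<Sum>c\<in>C. t c *\<^sub>R c)" using assms span_finite[OF fin] by auto
  have "u \<bullet> ds c' = t c'" if "c' \<in> C" for c'
  proof -
    have "u \<bullet> ds c' = (\<Sum>c\<in>C. t c * (c \<bullet> ds c'))" unfolding t
      by (simp add: inner_sum_left)
    also have "\<dots> = (\<Sum>c\<in>C. if c = c' then t c else 0)"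
      using that by (intro sum.cong) (auto simp: dsd inner_commute[of _ "ds c'"])
    also have "\<dots> = t c'" using fin that by (simp add: sum.delta')
    finally show ?thesis .
  qed
  have "(\<Sum>c\<in>C. (u \<bullet> ds c) *\<^sub>R c) = (\<Sum>c\<in>C. t c *\<^sub>R c)"
    by (intro sum.cong) (auto simp: \<open>\<And>c'. c' \<in> C \<Longrightarrow> u \<bullet> ds c' = t c'\<close>)
  then show ?thesis using t by simp
qed

lemma exp2: assumes "u \<in> span C" shows "u = pr u"
proof -
  define d where "d = u - pr u"
  have prC: "pr u \<in> span C" unfolding pr_def by (intro span_sum span_mul dsC)
  have dC: "d \<in> span C" unfolding d_def using assms prC by (rule span_diff)
  have "d \<bullet> c' = 0" if "c' \<in> C" for c'
  proof -
    have "pr u \<bullet> c' = (\<Sum>c\<in>C. (u \<bullet> c) * (ds c \<bullet> c'))" unfolding pr_def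
      by (simp add: inner_sum_left)
    also have "\<dots> = u \<bullet> c'" using sum_delta_dot[OF that] .
    finally show ?thesis unfolding d_def by (simp add: inner_diff_left)
  qed
  then have "orthogonal d d" using dC by (rule_tac orthogonal_to_span) (auto simp: orthogonal_def)
  then have "d = 0" by (simp add: orthogonal_def)
  then show ?thesis unfolding d_def by simp
qed

lemma pr_span: "pr x \<in> span C" unfolding pr_def by (intro span_sum span_mul dsC)

lemma pr_inner: assumes "a \<in> span C" shows "a \<bullet> pr x = a \<bullet> x"
proof -
  have "a \<bullet> pr x = (\<Sum>c\<in>C. (x \<bullet> c) * (a \<bullet> ds c))" unfolding pr_def by (simp add: inner_sum_right)
  also have "\<dots> = x \<bullet> (\<Sum>c\<in>C. (a \<bullet> ds c) *\<^sub>R c)" by (simp add: inner_sum_right mult.commute)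
  also have "\<dots> = x \<bullet> a" using exp1[OF assms] by simp
  finally show ?thesis by (simp add: inner_commute)
qed

lemma pr_linear: "linear pr"
proof (rule linearI)
  fix x y show "pr (x + y) = pr x + pr y" unfolding pr_def
    by (simp add: inner_add_left scaleR_add_left sum.distrib)
next
  fix r :: real and x show "pr (r *\<^sub>R x) = r *\<^sub>R pr x" unfolding pr_def
    by (simp add: scaleR_sum_right)
qed

lemma inj_ds: "inj_on ds C"
proof (rule inj_onI)
  fix x y assume "x \<in> C" "y \<in> C" "ds x = ds y"
  then have "ds x \<bullet> y = ds y \<bullet> y" by simp
  then show "x = y" using \<open>x \<in> C\<close> \<open>y \<in> C\<close> by (simp add: dsd split: if_splits)
qed

definition LL :: "'a set" where "LL = {\<Sum>c\<in>C. of_int (k c) *\<^sub>R ds c | k. True}"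

lemma LL_zspan: "LL = zspan (ds ` C)"
proof
  show "LL \<subseteq> zspan (ds ` C)"
  proof
    fix x assume "x \<in> LL"
    then obtain k where k: "x = (\<Sum>c\<in>C. of_int (k c) *\<^sub>R ds c)" unfolding LL_def by blast
    define k' where "k' w = k (inv_into C ds w)" for w
    have "(\<Sum>w\<in>ds ` C. of_int (k' w) *\<^sub>R w) = (\<Sum>c\<in>C. of_int (k' (ds c)) *\<^sub>R ds c)"
      using inj_ds by (simp add: sum.reindex)
    also have "\<dots> = x" unfolding k k'_def using inj_ds by (intro sum.cong) auto
    finally show "x \<in> zspan (ds ` C)" unfolding zspan_def by (intro CollectI exI[of _ k']) simp
  qed
next
  show "zspan (ds ` C) \<subseteq> LL"
  proof
    fix x assume "x \<in> zspan (ds ` C)"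
    then obtain k where k: "x = (\<Sum>w\<in>ds ` C. of_int (k w) *\<^sub>R w)" unfolding zspan_def by blast
    then have "x = (\<Sum>c\<in>C. of_int (k (ds c)) *\<^sub>R ds c)" using inj_ds by (simp add: sum.reindex)
    then show "x \<in> LL" unfolding LL_def by (intro CollectI exI[of _ "\<lambda>c. k (ds c)"]) simp
  qed
qed

lemma indep_ds: "independent (ds ` C)"
proof
  assume "dependent (ds ` C)"
  then obtain u where u: "\<exists>v\<in>ds ` C. u v \<noteq> 0" "(\<Sum>v\<in>ds ` C. u v *\<^sub>R v) = 0"
    using dependent_finite[of "ds ` C"] fin by auto
  have s: "(\<Sum>c\<in>C. u (ds c) *\<^sub>R ds c) = 0" using u(2) inj_ds by (simp add: sum.reindex)
  have "u (ds c') = 0" if "c' \<in> C" for c'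
  proof -
    have "0 = (\<Sum>c\<in>C. u (ds c) *\<^sub>R ds c) \<bullet> c'" using s by simp
    also have "\<dots> = (\<Sum>c\<in>C. u (ds c) * (ds c \<bullet> c'))" by (simp add: inner_sum_left)
    also have "\<dots> = u (ds c')" by (rule sum_delta_dot[OF that])
    finally show ?thesis by simp
  qed
  then show False using u(1) by auto
qed

lemma is_lattice_LL: "is_lattice LL"
  unfolding is_lattice_def LL_zspan zspan_def using indep_ds by blast

lemma ds_LL: "c \<in> C \<Longrightarrow> ds c \<in> LL"
  unfolding LL_zspan by (rule zspan_mem) (use fin in auto)

lemma span_LL: "span LL = span C"
proof
  have "LL \<subseteq> span C" unfolding LL_def by (auto intro!: span_sum span_mul dsC)
  then show "span LL \<subseteq> span C" by (metis span_minimal subspace_span)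
next
  have "ds ` C \<subseteq> span LL" using ds_LL by (auto intro: span_base)
  then have "span (ds ` C) \<subseteq> span LL" by (metis span_minimal subspace_span)
  moreover have "C \<subseteq> span (ds ` C)"
  proof
    fix c assume "c \<in> C"
    then have "c = pr c" using exp2 span_base by blast
    also have "pr c \<in> span (ds ` C)" unfolding pr_def by (intro span_sum span_mul span_base) auto
    finally show "c \<in> span (ds ` C)" .
  qed
  ultimately show "span C \<subseteq> span LL" by (metis span_minimal subspace_span subset_trans)
qed

lemma zspan_C_span: "zspan C \<subseteq> span C"
proof
  fix x assume "x \<in> zspan C"
  then obtain k where "x = (\<Sum>c\<in>C. of_int (k c) *\<^sub>R c)" unfolding zspan_def by blast
  moreover have "(\<Sum>c\<in>C. of_int (k c) *\<^sub>R c) \<in> span C" by (intro span_sum span_mul span_base)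
  ultimately show "x \<in> span C" by simp
qed

lemma dual_LL: "dual_lattice LL = zspan C"
proof
  show "dual_lattice LL \<subseteq> zspan C"
  proof
    fix a assume "a \<in> dual_lattice LL"
    then have a: "a \<in> span C" "\<And>x. x \<in> LL \<Longrightarrow> a \<bullet> x \<in> \<int>" unfolding dual_lattice_def span_LL by auto
    have "a \<bullet> ds c \<in> \<int>" if "c \<in> C" for c using a(2) ds_LL[OF that] .
    then have "(\<Sum>c\<in>C. (a \<bullet> ds c) *\<^sub>R c) = (\<Sum>c\<in>C. of_int \<lfloor>a \<bullet> ds c\<rfloor> *\<^sub>R c)"
      by (intro sum.cong) (auto elim!: Ints_cases)
    then have "a = (\<Sum>c\<in>C. of_int \<lfloor>a \<bullet> ds c\<rfloor> *\<^sub>R c)" using exp1[OF a(1)] by simp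
    then have "\<exists>k. a = (\<Sum>c\<in>C. of_int (k c) *\<^sub>R c)" by (intro exI[of _ "\<lambda>c. \<lfloor>a \<bullet> ds c\<rfloor>"])
    then show "a \<in> zspan C" unfolding zspan_def by simp
  qed
next
  show "zspan C \<subseteq> dual_lattice LL"
  proof
    fix a assume aZ: "a \<in> zspan C"
    then obtain m where m: "a = (\<Sum>c\<in>C. of_int (m c) *\<^sub>R c)" unfolding zspan_def by blast
    have ads: "a \<bullet> ds c' = of_int (m c')" if "c' \<in> C" for c'
    proof -
      have "a \<bullet> ds c' = (\<Sum>c\<in>C. of_int (m c) * (c \<bullet> ds c'))" unfolding m
        by (simp add: inner_sum_left)
      also have "\<dots> = (\<Sum>c\<in>C. if c = c' then of_int (m c) else 0)"
        using that by (intro sum.cong) (auto simp: dsd inner_commute[of _ "ds c'"])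
      also have "\<dots> = of_int (m c')" using fin that by (simp add: sum.delta')
      finally show ?thesis .
    qed
    have "a \<bullet> x \<in> \<int>" if "x \<in> LL" for x
    proof -
      obtain k where k: "x = (\<Sum>c\<in>C. of_int (k c) *\<^sub>R ds c)" using \<open>x \<in> LL\<close> unfolding LL_def by blast
      have "a \<bullet> x = (\<Sum>c\<in>C. of_int (k c) * (a \<bullet> ds c))" unfolding k by (simp add: inner_sum_right)
      also have "\<dots> = (\<Sum>c\<in>C. of_int (k c * m c))" by (intro sum.cong) (auto simp: ads)
      also have "\<dots> = of_int (\<Sum>c\<in>C. k c * m c)" by simp
      finally show ?thesis by (metis Ints_of_int)
    qed
    moreover have "a \<in> span LL" using aZ zspan_C_span span_LL by auto
    ultimately show "a \<in> dual_lattice LL" unfolding dual_lattice_def by auto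
  qed
qed

lemma pr_LL: assumes "\<And>c. c \<in> C \<Longrightarrow> x \<bullet> c \<in> \<int>" shows "pr x \<in> LL"
proof -
  have "pr x = (\<Sum>c\<in>C. of_int \<lfloor>x \<bullet> c\<rfloor> *\<^sub>R ds c)" unfolding pr_def
    using assms by (intro sum.cong) (auto elim!: Ints_cases)
  then have "\<exists>k. pr x = (\<Sum>c\<in>C. of_int (k c) *\<^sub>R ds c)" by (intro exI[of _ "\<lambda>c. \<lfloor>x \<bullet> c\<rfloor>"])
  then show ?thesis unfolding LL_def by simp
qed

lemma range_pr: "range pr = span C"
  using pr_span exp2 by (auto intro: image_eqI)

end



lemma zspan_I: "x = (\<Sum>b\<in>B. of_int (c b) *\<^sub>R b) \<Longrightarrow> x \<in> zspan B"
  unfolding zspan_def by blast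

lemma Basis_std: "b \<in> Basis \<Longrightarrow> (b::'a::euclidean_space) \<in> std_lattice"
  unfolding std_lattice_def by (auto simp: inner_Basis)

lemma std_inner_Ints: "a \<in> std_lattice \<Longrightarrow> x \<in> std_lattice \<Longrightarrow> (a::'a::euclidean_space) \<bullet> x \<in> \<int>"
  unfolding std_lattice_def
  by (subst euclidean_inner) (auto intro!: Ints_sum Ints_mult)

lemma span_std: "span (std_lattice::'a::euclidean_space set) = UNIV"
proof -
  have "(Basis::'a set) \<subseteq> std_lattice" using Basis_std by blast
  then have "span (Basis::'a set) \<subseteq> span std_lattice" by (rule span_mono)
  then show ?thesis by auto
qed

lemma dual_std: "dual_lattice (std_lattice::'a::euclidean_space set) = std_lattice"
  unfolding dual_lattice_def span_std
proof (auto simp: std_inner_Ints)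
  fix a :: 'a assume "\<forall>x\<in>std_lattice. a \<bullet> x \<in> \<int>"
  then show "a \<in> std_lattice" using Basis_std unfolding std_lattice_def by blast
qed

lemma std_zspan: "(std_lattice::'a::euclidean_space set) \<subseteq> zspan Basis"
proof
  fix x :: 'a assume "x \<in> std_lattice"
  then have "\<forall>b\<in>Basis. x \<bullet> b \<in> \<int>" unfolding std_lattice_def by auto
  then have "x = (\<Sum>b\<in>Basis. of_int \<lfloor>x \<bullet> b\<rfloor> *\<^sub>R b)"
    by (subst euclidean_representation[symmetric, of x]) (intro sum.cong, auto elim!: Ints_cases)
  then show "x \<in> zspan Basis" by (rule zspan_I)
qed

lemma sgrp_std_subspace: "subspace U \<Longrightarrow> sgrp (U \<inter> (std_lattice::'a::euclidean_space set))"
  unfolding sgrp_def std_lattice_def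
  by (auto simp: subspace_0 subspace_diff inner_diff_left)

lemma std_norm_ge1: assumes "a \<in> std_lattice" "a \<noteq> (0::'a::euclidean_space)" shows "norm a \<ge> 1"
proof -
  obtain b where b: "b \<in> Basis" "a \<bullet> b \<noteq> 0" using assms(2) euclidean_all_zero_iff by blast
  have "a \<bullet> b \<in> \<int>" using assms(1) b(1) unfolding std_lattice_def by auto
  then have "\<bar>a \<bullet> b\<bar> \<ge> 1" using b(2) by (auto elim!: Ints_cases)
  then show ?thesis using Basis_le_norm[OF b(1), of a] by linarith
qed

lemma supp_le: assumes "compact P" "p \<in> P" shows "supp_fun P a \<le> a \<bullet> p"
proof -
  have "bounded ((\<lambda>x. a \<bullet> x) ` P)"
    using assms(1) by (intro compact_imp_bounded compact_continuous_image continuous_intros)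
  then have "bdd_below ((\<lambda>x. a \<bullet> x) ` P)" by (rule bounded_imp_bdd_below)
  then show ?thesis unfolding supp_fun_def using assms(2) by (auto intro: cInf_lower)
qed

lemma adj_std: "fine_adjoint std_lattice P s = {x. \<forall>a\<in>std_lattice - {0}. a \<bullet> x \<ge> supp_fun P a + s}"
  unfolding fine_adjoint_def dual_std span_std by simp

lemma adj_mono: "s \<le> t \<Longrightarrow> fine_adjoint L P t \<subseteq> fine_adjoint L P s"
  unfolding fine_adjoint_def by force



lemma std_neg: "b \<in> std_lattice \<Longrightarrow> - b \<in> (std_lattice::'a::euclidean_space set)"
  unfolding std_lattice_def by auto

lemma S_nonempty:
  fixes P :: "'a::euclidean_space set"
  assumes "compact P" "convex P" "P \<noteq> {}" "aff_dim P = DIM('a)"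
  shows "\<exists>s>0. fine_adjoint std_lattice P s \<noteq> {}"
proof -
  have "rel_interior P = interior P" using assms(4) by (intro interior_rel_interior) simp
  then have "interior P \<noteq> {}" using rel_interior_eq_empty[OF assms(2)] assms(3) by simp
  then obtain x where "x \<in> interior P" by blast
  then obtain r where r: "r > 0" "cball x r \<subseteq> P" using mem_interior_cball by blast
  have "x \<in> fine_adjoint std_lattice P r"
    unfolding adj_std
  proof (intro CollectI ballI)
    fix a :: 'a assume a: "a \<in> std_lattice - {0}"
    then have na: "norm a \<ge> 1" using std_norm_ge1 by blast
    have anz: "a \<noteq> 0" using a by auto
    define p where "p = x - (r / norm a) *\<^sub>R a"
    have "dist x p = r" unfolding p_def dist_norm using anz r(1) by simp
    then have "p \<in> P" using r(2) by auto
    then have "supp_fun P a \<le> a \<bullet> p" by (rule supp_le[OF assms(1)])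
    also have "a \<bullet> p = a \<bullet> x - r * norm a" unfolding p_def using na
      by (simp add: inner_diff_right power2_norm_eq_inner[symmetric] power2_eq_square)
    also have "\<dots> \<le> a \<bullet> x - r" using na r(1) by (simp add: mult_le_cancel_left1)
    finally show "supp_fun P a + r \<le> a \<bullet> x" by simp
  qed
  then show ?thesis using r(1) by blast
qed

lemma adj_bound:
  fixes P :: "'a::euclidean_space set"
  assumes "x \<in> fine_adjoint std_lattice P s" "b \<in> Basis"
  shows "supp_fun P b + s \<le> x \<bullet> b" "x \<bullet> b \<le> - supp_fun P (- b) - s"
proof -
  have "b \<in> std_lattice - {0}" "- b \<in> std_lattice - {0}" using assms(2) Basis_std std_neg
    by (auto simp: nonzero_Basis)
  then have "supp_fun P b + s \<le> b \<bullet> x" "supp_fun P (- b) + s \<le> (- b) \<bullet> x"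
    using assms(1) unfolding adj_std by blast+
  then show "supp_fun P b + s \<le> x \<bullet> b" "x \<bullet> b \<le> - supp_fun P (- b) - s"
    by (auto simp: inner_commute)
qed

lemma S_bdd:
  fixes P :: "'a::euclidean_space set"
  shows "bdd_above {s. s > 0 \<and> fine_adjoint std_lattice P s \<noteq> {}}"
proof -
  obtain b :: 'a where b: "b \<in> Basis" using nonempty_Basis by blast
  show ?thesis
  proof (rule bdd_aboveI)
    fix s assume "s \<in> {s. s > 0 \<and> fine_adjoint std_lattice P s \<noteq> {}}"
    then obtain x where "x \<in> fine_adjoint std_lattice P s" by auto
    from adj_bound[OF this b] have "2 * s \<le> - (supp_fun P b + supp_fun P (- b))" by linarith
    then show "s \<le> - (supp_fun P b + supp_fun P (- b)) / 2" by (simp add: field_simps)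
  qed
qed

lemma adj_compact:
  fixes P :: "'a::euclidean_space set"
  shows "compact (fine_adjoint std_lattice P s)"
  unfolding compact_eq_bounded_closed
proof (rule conjI[rotated])
  have "fine_adjoint std_lattice P s = (\<Inter>a\<in>std_lattice - {0}. {x. a \<bullet> x \<ge> supp_fun P a + s})"
    unfolding adj_std by auto
  then show "closed (fine_adjoint std_lattice P s)"
    by (simp add: closed_INT closed_halfspace_ge)
next
  define M where "M = (\<Sum>b\<in>(Basis::'a set). \<bar>supp_fun P b\<bar> + \<bar>supp_fun P (- b)\<bar> + \<bar>s\<bar>)"
  show "bounded (fine_adjoint std_lattice P s)"
    unfolding bounded_iff
  proof (intro exI[of _ M] ballI)
    fix x assume x: "x \<in> fine_adjoint std_lattice P s"
    have "norm x \<le> (\<Sum>b\<in>Basis. \<bar>x \<bullet> b\<bar>)" by (rule norm_le_l1)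
    also have "\<dots> \<le> M" unfolding M_def
    proof (rule sum_mono)
      fix b :: 'a assume "b \<in> Basis"
      from adj_bound[OF x this] show "\<bar>x \<bullet> b\<bar> \<le> \<bar>supp_fun P b\<bar> + \<bar>supp_fun P (- b)\<bar> + \<bar>s\<bar>"
        by linarith
    qed
    finally show "norm x \<le> M" .
  qed
qed

lemma core_nonempty:
  fixes P :: "'a::euclidean_space set"
  assumes "compact P" "convex P" "P \<noteq> {}" "aff_dim P = DIM('a)"
  shows "fine_core std_lattice P \<noteq> {}" "fine_number std_lattice P > 0"
proof -
  define S where "S = {s. s > 0 \<and> fine_adjoint std_lattice P s \<noteq> {}}"
  obtain s0 where s0: "s0 > 0" "fine_adjoint std_lattice P s0 \<noteq> {}" using S_nonempty[OF assms] by blast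
  have s0S: "s0 \<in> S" using s0 unfolding S_def by auto
  have bdd: "bdd_above S" unfolding S_def by (rule S_bdd)
  have n: "fine_number std_lattice P = Sup S" unfolding fine_number_def S_def ..
  have "s0 \<le> Sup S" using s0S bdd by (rule cSup_upper)
  then show "fine_number std_lattice P > 0" using n s0(1) by simp
  define I where "I = {s \<in> S. s \<ge> s0}"
  have "fine_adjoint std_lattice P s0 \<inter> (\<Inter>s\<in>I. fine_adjoint std_lattice P s) \<noteq> {}"
  proof (rule compact_imp_fip_image)
    show "compact (fine_adjoint std_lattice P s0)" by (rule adj_compact)
  next
    fix s assume "s \<in> I"
    show "closed (fine_adjoint std_lattice P s)" using adj_compact compact_imp_closed by blast
  next
    fix I' assume I': "finite I'" "I' \<subseteq> I"
    show "fine_adjoint std_lattice P s0 \<inter> (\<Inter>s\<in>I'. fine_adjoint std_lattice P s) \<noteq> {}"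
    proof (cases "I' = {}")
      case True then show ?thesis using s0 by simp
    next
      case False
      define t where "t = Max I'"
      have tI: "t \<in> I'" unfolding t_def using I'(1) False by (rule Max_in)
      then have "t \<in> S" "t \<ge> s0" using I'(2) unfolding I_def by auto
      then have ne: "fine_adjoint std_lattice P t \<noteq> {}" unfolding S_def by auto
      have "fine_adjoint std_lattice P t \<subseteq> fine_adjoint std_lattice P s0 \<inter> (\<Inter>s\<in>I'. fine_adjoint std_lattice P s)"
      proof -
        have "\<forall>s\<in>I'. s \<le> t" unfolding t_def using I'(1) by simp
        then show ?thesis using adj_mono[OF \<open>t \<ge> s0\<close>] adj_mono[of _ t] by blast
      qed
      then show ?thesis using ne by blast
    qed
  qed
  then obtain x where x: "x \<in> fine_adjoint std_lattice P s0" "\<And>s. s \<in> I \<Longrightarrow> x \<in> fine_adjoint std_lattice P s"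
    by blast
  have "x \<in> fine_adjoint std_lattice P (Sup S)"
    unfolding adj_std
  proof (intro CollectI ballI)
    fix a :: 'a assume a: "a \<in> std_lattice - {0}"
    have "Sup S \<le> a \<bullet> x - supp_fun P a"
    proof (rule cSup_least)
      show "S \<noteq> {}" using s0S by blast
    next
      fix s assume s: "s \<in> S"
      show "s \<le> a \<bullet> x - supp_fun P a"
      proof (cases "s \<ge> s0")
        case True
        then have "s \<in> I" using s unfolding I_def by auto
        then show ?thesis using x(2) a unfolding adj_std by force
      next
        case False
        then show ?thesis using x(1) a unfolding adj_std by force
      qed
    qed
    then show "supp_fun P a + Sup S \<le> a \<bullet> x" by simp
  qed
  then show "fine_core std_lattice P \<noteq> {}" unfolding fine_core_def n by blast
qed



lemma main_gen:
  fixes P :: "'a::euclidean_space set" and a :: "nat \<Rightarrow> 'a" and lam :: "nat \<Rightarrow> real" and l :: nat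
  assumes lp: "lattice_polytope std_lattice P"
    and full: "aff_dim P = int DIM('a)"
    and cn: "\<forall>i\<le>l. fine_core_normal std_lattice P (a i)"
    and lpos: "\<forall>i\<le>l. lam i > 0"
    and rel: "(\<Sum>i\<le>l. lam i *\<^sub>R a i) = 0"
  shows "\<exists>(L::'a set) (Q::'a set). is_lattice L \<and> lattice_polytope L Q \<and> aff_dim Q = int (dim L)
              \<and> aff_dim Q \<le> int l \<and> fine_codegree std_lattice P = fine_codegree L Q"
proof -
  obtain V where V: "finite V" "V \<noteq> {}" "V \<subseteq> std_lattice" "P = convex hull V"
    using lp unfolding lattice_polytope_def by blast
  have cP: "compact P" using V by (simp add: compact_convex_hull finite_imp_compact)
  have cvP: "convex P" using V by simp
  have neP: "P \<noteq> {}" using V by simp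
  note core = core_nonempty[OF cP cvP neP full]
  define n where "n = fine_number std_lattice P"
  define SP where "SP = {s. s > 0 \<and> fine_adjoint std_lattice P s \<noteq> {}}"
  have nSP: "n = Sup SP" unfolding n_def SP_def fine_number_def ..
  have SPne: "SP \<noteq> {}" using S_nonempty[OF cP cvP neP full] unfolding SP_def by blast
  obtain z where z: "z \<in> fine_core std_lattice P" using core(1) by blast
  have an: "a i \<in> std_lattice" "a i \<noteq> 0" "a i \<bullet> z = supp_fun P (a i) + n" if "i \<le> l" for i
    using cn that z unfolding fine_core_normal_def dual_std n_def by auto
  define U where "U = span (a ` {..l})"
  define G where "G = U \<inter> std_lattice"
  have sG: "sgrp G" unfolding G_def U_def by (intro sgrp_std_subspace subspace_span)
  have "G \<subseteq> zspan Basis" unfolding G_def using std_zspan by blast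
  then obtain C where C: "finite C" "independent C" "C \<subseteq> G" "G = zspan C"
    using zbasis[OF finite_Basis independent_Basis sG] by blast
  obtain ds where ds: "\<And>c. c \<in> C \<Longrightarrow> ds c \<in> span C"
    "\<And>c c'. c \<in> C \<Longrightarrow> c' \<in> C \<Longrightarrow> ds c \<bullet> c' = (if c = c' then 1 else 0)"
    using dual_basis_exists[OF C(1,2)] by blast
  interpret dualb C ds using C(1,2) ds by unfold_locales auto
  have aG: "a i \<in> G" if "i \<le> l" for i
    unfolding G_def U_def using an(1)[OF that] that by (auto intro: span_base)
  have spanC: "span C = U"
  proof
    have "C \<subseteq> U" using C(3) unfolding G_def by auto
    then show "span C \<subseteq> U" unfolding U_def by (metis span_minimal subspace_span)
  next
    have "a ` {..l} \<subseteq> span C" using aG C(4) zspan_C_span by auto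
    then show "U \<subseteq> span C" unfolding U_def by (metis span_minimal subspace_span)
  qed
  have Gstd: "G \<subseteq> std_lattice" unfolding G_def by auto
  define Q where "Q = pr ` P"
  have lin: "linear pr" by (rule pr_linear)
  have QV: "Q = convex hull (pr ` V)" unfolding Q_def V(4) by (rule convex_hull_linear_image[OF lin])
  have prV: "pr ` V \<subseteq> LL"
  proof
    fix w assume "w \<in> pr ` V"
    then obtain v where v: "v \<in> V" "w = pr v" by blast
    have "v \<bullet> c \<in> \<int>" if "c \<in> C" for c
      using std_inner_Ints[of v c] v(1) V(3) that C(3) Gstd by auto
    then show "w \<in> LL" using v(2) pr_LL by blast
  qed
  have lpQ: "lattice_polytope LL Q" unfolding lattice_polytope_def
    using QV prV V(1,2) by blast
  have "affine hull P = UNIV" using full aff_dim_eq_full by blast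
  then have "affine hull Q = span C"
    unfolding Q_def using affine_hull_linear_image[OF linear_conv_bounded_linear[THEN iffD1, OF lin], of P]
      range_pr by simp
  then have adQ: "aff_dim Q = int (dim C)"
    by (metis aff_dim_affine_hull aff_dim_subspace dim_span subspace_span)
  have dimLL: "dim LL = dim C" by (metis dim_span span_LL)
  have "dim C \<le> l"
  proof -
    have a0: "a 0 \<in> span (a ` {1..l})"
    proof -
      have "{..l} = insert 0 {1..l}" by auto
      then have "lam 0 *\<^sub>R a 0 + (\<Sum>i\<in>{1..l}. lam i *\<^sub>R a i) = 0" using rel by simp
      then have h: "lam 0 *\<^sub>R a 0 = - (\<Sum>i\<in>{1..l}. lam i *\<^sub>R a i)"
        by (simp add: eq_neg_iff_add_eq_0)
      have l0: "lam 0 > 0" using lpos by auto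
      have "a 0 = inverse (lam 0) *\<^sub>R (lam 0 *\<^sub>R a 0)" using l0 by simp
      also have "\<dots> = (- inverse (lam 0)) *\<^sub>R (\<Sum>i\<in>{1..l}. lam i *\<^sub>R a i)"
        unfolding h by simp
      finally have "a 0 = (- inverse (lam 0)) *\<^sub>R (\<Sum>i\<in>{1..l}. lam i *\<^sub>R a i)" .
      also have "\<dots> \<in> span (a ` {1..l})" by (intro span_mul span_sum span_scale span_base) auto
      finally show ?thesis .
    qed
    have "a ` {..l} \<subseteq> span (a ` {1..l})"
    proof
      fix w assume "w \<in> a ` {..l}"
      then obtain i where "i \<le> l" "w = a i" by auto
      then show "w \<in> span (a ` {1..l})" using a0 by (cases "i = 0") (auto intro: span_base)
    qed
    then have "dim (a ` {..l}) \<le> card (a ` {1..l})" by (intro dim_le_card) auto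
    also have "\<dots> \<le> card {1..l}" by (rule card_image_le) simp
    finally have "dim (a ` {..l}) \<le> l" by simp
    moreover have "dim C = dim (a ` {..l})" using spanC unfolding U_def by (metis dim_span)
    ultimately show ?thesis by simp
  qed
  have suppQ: "supp_fun Q b = supp_fun P b" if "b \<in> span C" for b
  proof -
    have "(\<lambda>x. b \<bullet> x) ` Q = (\<lambda>x. b \<bullet> x) ` P" unfolding Q_def image_image
      using pr_inner[OF that] by simp
    then show ?thesis unfolding supp_fun_def by simp
  qed
  have adjQ: "fine_adjoint LL Q s = {x \<in> span C. \<forall>b\<in>G - {0}. b \<bullet> x \<ge> supp_fun P b + s}" for s
    unfolding fine_adjoint_def dual_LL span_LL C(4)[symmetric]
    using suppQ C(4) zspan_C_span by force
  define SQ where "SQ = {s. s > 0 \<and> fine_adjoint LL Q s \<noteq> {}}"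
  have sub: "SP \<subseteq> SQ"
  proof
    fix s assume "s \<in> SP"
    then obtain x where s: "s > 0" "x \<in> fine_adjoint std_lattice P s" unfolding SP_def by auto
    have "pr x \<in> fine_adjoint LL Q s" unfolding adjQ
    proof (intro CollectI conjI ballI pr_span)
      fix b assume b: "b \<in> G - {0}"
      then have "b \<in> span C" using C(4) zspan_C_span by auto
      then have "b \<bullet> pr x = b \<bullet> x" by (rule pr_inner)
      moreover have "b \<in> std_lattice - {0}" using b Gstd by auto
      ultimately show "supp_fun P b + s \<le> b \<bullet> pr x" using s(2) unfolding adj_std by auto
    qed
    then show "s \<in> SQ" using s(1) unfolding SQ_def by auto
  qed
  have bnd: "s \<le> n" if sQ: "s \<in> SQ" for s
  proof (rule ccontr)
    assume "\<not> s \<le> n"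
    then have sn: "s > n" by simp
    obtain y where y: "y \<in> fine_adjoint LL Q s" using sQ unfolding SQ_def by auto
    have pos: "lam i * (a i \<bullet> (y - z)) > 0" if "i \<le> l" for i
    proof -
      have "a i \<in> G - {0}" using aG an(2) that by auto
      then have "a i \<bullet> y \<ge> supp_fun P (a i) + s" using y unfolding adjQ by auto
      then have "a i \<bullet> (y - z) > 0" using an(3)[OF that] sn by (simp add: inner_diff_right)
      then show ?thesis using lpos that by simp
    qed
    have "(\<Sum>i\<le>l. lam i * (a i \<bullet> (y - z))) > 0" using pos by (intro sum_pos) auto
    moreover have "(\<Sum>i\<le>l. lam i * (a i \<bullet> (y - z))) = (\<Sum>i\<le>l. lam i *\<^sub>R a i) \<bullet> (y - z)"
      by (simp add: inner_sum_left)
    ultimately show False using rel by simp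
  qed
  have bddQ: "bdd_above SQ" using bnd by (intro bdd_aboveI) 
  have "fine_number LL Q = Sup SQ" unfolding fine_number_def SQ_def ..
  moreover have "Sup SQ \<le> n" using SPne sub bnd by (intro cSup_least) auto
  moreover have "n \<le> Sup SQ" unfolding nSP using SPne bddQ sub by (rule cSup_subset_mono)
  ultimately have "fine_number LL Q = n" by simp
  then have "fine_codegree std_lattice P = fine_codegree LL Q"
    unfolding fine_codegree_def n_def by simp
  then show ?thesis using is_lattice_LL lpQ adQ dimLL \<open>dim C \<le> l\<close>
    by (intro exI[of _ LL] exI[of _ Q]) auto
qed


theorem mainTheorem2:
  fixes P :: "(real^'d) set" and a :: "nat \<Rightarrow> real^'d" and lam :: "nat \<Rightarrow> real" and l :: nat
  assumes "lattice_polytope std_lattice P"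
    and "aff_dim P = int CARD('d)"
    and "\<forall>i\<le>l. fine_core_normal std_lattice P (a i)"
    and "\<forall>i\<le>l. lam i > 0"
    and "(\<Sum>i\<le>l. lam i *\<^sub>R a i) = 0"
  shows "\<exists>(L::(real^'d) set) (Q::(real^'d) set). is_lattice L \<and> lattice_polytope L Q \<and> aff_dim Q = int (dim L)
              \<and> aff_dim Q \<le> int l \<and> fine_codegree std_lattice P = fine_codegree L Q"
proof -
  have "aff_dim P = int DIM(real^'d)" using assms(2) by simp
  then show ?thesis using main_gen[OF assms(1) _ assms(3-5)] by blast
qed

end
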